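(* Let $\mathbf{PtdCat}$ be the category of pointed categories and $\mathbf{TPtdCat}$ its full subcategory of terminally pointed categories, and let $\iota:\mathbf{TPtdCat}\hookrightarrow\mathbf{PtdCat}$ be the inclusion. Then $\iota$ has a right adjoint $G:\mathbf{PtdCat}\to\mathbf{TPtdCat}$, given on objects by $G(A,\mathcal C)=(1_A,\mathcal C/A)$ and on a morphism $(F,\alpha):(A,\mathcal C)\to(B,\mathcal D)$ by $G(F,\alpha)=(\Sigma_\alpha\circ F/A,\ \alpha)$. More precisely, for every pointed category $(A,\mathcal C)$ the morphism $(\Sigma_A,1_A):(1_A,\mathcal C/A)\to(A,\mathcal C)$ is universal from $\iota$ to $(A,\mathcal C)$: for every terminally pointed category $(1,\mathcal D)$ and every morphism $(F,\alpha):(1,\mathcal D)\to(A,\mathcal C)$ there is a unique morphism $(\overline F,\overline\alpha):(1,\mathcal D)\to(1_A,\mathcal C/A)$ with $(\Sigma_A,1_A)\circ(\overline F,\overline\alpha)=(F,\alpha)$.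
   Context: A pointed category is a pair $(A,\mathcal C)$ with $\mathcal C$ a non-empty category and $A$ an object of $\mathcal C$. A morphism of pointed categories $(A,\mathcal C)\to(B,\mathcal D)$ is a pair $(F,\alpha)$ with $F:\mathcal C\to\mathcal D$ a functor and $\alpha:FA\to B$ a morphism of $\mathcal D$. Composition: $(G,\beta)\circ(F,\alpha)=(GF,\ \beta\circ G\alpha)$; identities are $(1_{\mathcal C},1_A)$. This gives the category $\mathbf{PtdCat}$. A terminally pointed category is a pointed category $(1,\mathcal C)$ where $1$ is a chosen terminal object of $\mathcal C$; these span the full subcategory $\mathbf{TPtdCat}$. For an object $A$ of $\mathcal C$, $\mathcal C/A$ is the slice category (objects: morphisms $x:X\to A$; morphisms $g:(x:X\to A)\to(y:Y\to A)$ with $yg=x$), with terminal object $1_A$. $\Sigma_A:\mathcal C/A\to\mathcal C$ is the forgetful functor. For $f:A\to B$ in $\mathcal C$, $\Sigma_f:\mathcal C/A\to\mathcal C/B$ sends $x$ to $fx$ and $g$ to $g$. For a functor $F:\mathcal C\to\mathcal D$, the slice functor $F/A:\mathcal C/A\to\mathcal D/FA$ sends $x:X\to A$ to $Fx$ and $g$ to $Fg$. *)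

theory Defs
  imports Main
begin

record ('o, 'a) cat =
  Obj  :: "'o set"
  Arr  :: "'a set"
  Dom  :: "'a \<Rightarrow> 'o"
  Cod  :: "'a \<Rightarrow> 'o"
  Id   :: "'o \<Rightarrow> 'a"
  Comp :: "'a \<Rightarrow> 'a \<Rightarrow> 'a"   (* Comp C g f = g \<circ> f *)

definition is_category :: "('o, 'a) cat \<Rightarrow> bool" where
  "is_category C \<longleftrightarrow>
     (\<forall>f\<in>Arr C. Dom C f \<in> Obj C \<and> Cod C f \<in> Obj C) \<and>
     (\<forall>X\<in>Obj C. Id C X \<in> Arr C \<and> Dom C (Id C X) = X \<and> Cod C (Id C X) = X) \<and>
     (\<forall>f\<in>Arr C. \<forall>g\<in>Arr C. Cod C f = Dom C g \<longrightarrow>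
         Comp C g f \<in> Arr C \<and> Dom C (Comp C g f) = Dom C f \<and> Cod C (Comp C g f) = Cod C g) \<and>
     (\<forall>f\<in>Arr C. Comp C (Id C (Cod C f)) f = f \<and> Comp C f (Id C (Dom C f)) = f) \<and>
     (\<forall>f\<in>Arr C. \<forall>g\<in>Arr C. \<forall>h\<in>Arr C. Cod C f = Dom C g \<longrightarrow> Cod C g = Dom C h \<longrightarrow>
         Comp C h (Comp C g f) = Comp C (Comp C h g) f)"

definition is_terminal :: "('o, 'a) cat \<Rightarrow> 'o \<Rightarrow> bool" where
  "is_terminal C T \<longleftrightarrow> T \<in> Obj C \<and>
     (\<forall>X\<in>Obj C. \<exists>!f. f \<in> Arr C \<and> Dom C f = X \<and> Cod C f = T)"

record ('o, 'a, 'p, 'b) ftor =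
  FObj :: "'o \<Rightarrow> 'p"
  FArr :: "'a \<Rightarrow> 'b"

definition is_functor :: "('o, 'a) cat \<Rightarrow> ('p, 'b) cat \<Rightarrow> ('o, 'a, 'p, 'b) ftor \<Rightarrow> bool" where
  "is_functor C D F \<longleftrightarrow>
     (\<forall>X\<in>Obj C. FObj F X \<in> Obj D) \<and>
     (\<forall>f\<in>Arr C. FArr F f \<in> Arr D \<and> Dom D (FArr F f) = FObj F (Dom C f)
                                     \<and> Cod D (FArr F f) = FObj F (Cod C f)) \<and>
     (\<forall>X\<in>Obj C. FArr F (Id C X) = Id D (FObj F X)) \<and>
     (\<forall>f\<in>Arr C. \<forall>g\<in>Arr C. Cod C f = Dom C g \<longrightarrow>
         FArr F (Comp C g f) = Comp D (FArr F g) (FArr F f)) \<and>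
     (\<forall>X. X \<notin> Obj C \<longrightarrow> FObj F X = undefined) \<and>
     (\<forall>f. f \<notin> Arr C \<longrightarrow> FArr F f = undefined)"

definition fcomp :: "('o, 'a) cat \<Rightarrow> ('p, 'b, 'q, 'c) ftor \<Rightarrow> ('o, 'a, 'p, 'b) ftor
                     \<Rightarrow> ('o, 'a, 'q, 'c) ftor" where
  "fcomp C G F = \<lparr> FObj = (\<lambda>X. if X \<in> Obj C then FObj G (FObj F X) else undefined),
                   FArr = (\<lambda>f. if f \<in> Arr C then FArr G (FArr F f) else undefined) \<rparr>"

definition is_ptd_cat :: "'o \<Rightarrow> ('o, 'a) cat \<Rightarrow> bool" where
  "is_ptd_cat A C \<longleftrightarrow> is_category C \<and> Obj C \<noteq> {} \<and> A \<in> Obj C"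

definition is_tptd_cat :: "'o \<Rightarrow> ('o, 'a) cat \<Rightarrow> bool" where
  "is_tptd_cat T C \<longleftrightarrow> is_ptd_cat T C \<and> is_terminal C T"

definition ptd_hom :: "'o \<Rightarrow> ('o, 'a) cat \<Rightarrow> 'p \<Rightarrow> ('p, 'b) cat
                       \<Rightarrow> ('o, 'a, 'p, 'b) ftor \<times> 'b \<Rightarrow> bool" where
  "ptd_hom A C B D Fa \<longleftrightarrow> is_ptd_cat A C \<and> is_ptd_cat B D \<and>
     is_functor C D (fst Fa) \<and> snd Fa \<in> Arr D \<and>
     Dom D (snd Fa) = FObj (fst Fa) A \<and> Cod D (snd Fa) = B"

definition ptd_comp :: "('o, 'a) cat \<Rightarrow> ('q, 'c) cat \<Rightarrow> ('p, 'b, 'q, 'c) ftor \<times> 'c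
                        \<Rightarrow> ('o, 'a, 'p, 'b) ftor \<times> 'b \<Rightarrow> ('o, 'a, 'q, 'c) ftor \<times> 'c" where
  "ptd_comp C E Gb Fa = (fcomp C (fst Gb) (fst Fa), Comp E (snd Gb) (FArr (fst Gb) (snd Fa)))"

text \<open>A morphism \<open>g : x \<rightarrow> y\<close> is represented as the
  triple \<open>(x, g, y)\<close> with \<open>y \<circ> g = x\<close>.\<close>
definition slice :: "('o, 'a) cat \<Rightarrow> 'o \<Rightarrow> ('a, 'a \<times> 'a \<times> 'a) cat" where
  "slice C A = \<lparr>
     Obj = {x \<in> Arr C. Cod C x = A},
     Arr = {(x, g, y). x \<in> Arr C \<and> Cod C x = A \<and> y \<in> Arr C \<and> Cod C y = A \<and>
                       g \<in> Arr C \<and> Dom C g = Dom C x \<and> Cod C g = Dom C y \<and> Comp C y g = x},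
     Dom = (\<lambda>(x, g, y). x),
     Cod = (\<lambda>(x, g, y). y),
     Id = (\<lambda>x. (x, Id C (Dom C x), x)),
     Comp = (\<lambda>(y, h, z) (x, g, y'). (x, Comp C h g, z)) \<rparr>"

definition Sigma_fun :: "('o, 'a) cat \<Rightarrow> 'o \<Rightarrow> ('a, 'a \<times> 'a \<times> 'a, 'o, 'a) ftor" where
  "Sigma_fun C A = \<lparr> FObj = (\<lambda>x. if x \<in> Obj (slice C A) then Dom C x else undefined),
                     FArr = (\<lambda>t. if t \<in> Arr (slice C A) then fst (snd t) else undefined) \<rparr>"

end

theory Submission imports Defs begin

lemma slice_simps:
  "Obj (slice C A) = {x \<in> Arr C. Cod C x = A}"
  "t \<in> Arr (slice C A) \<longleftrightarrow> (case t of (x, g, y) \<Rightarrow> x \<in> Arr C \<and> Cod C x = A \<and> y \<in> Arr C \<and> Cod C y = A \<and>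
                       g \<in> Arr C \<and> Dom C g = Dom C x \<and> Cod C g = Dom C y \<and> Comp C y g = x)"
  "Dom (slice C A) (x,g,y) = x"
  "Cod (slice C A) (x,g,y) = y"
  "Id (slice C A) x = (x, Id C (Dom C x), x)"
  "Comp (slice C A) (y,h,z) (x,g,y') = (x, Comp C h g, z)"
  by (auto simp: slice_def)

lemma slice_cat:
  assumes C: "is_category C" and A: "A \<in> Obj C"
  shows "is_category (slice C A)"
proof -
  have c1: "\<And>f. f\<in>Arr C \<Longrightarrow> Dom C f \<in> Obj C \<and> Cod C f \<in> Obj C"
   and c2: "\<And>X. X\<in>Obj C \<Longrightarrow> Id C X \<in> Arr C \<and> Dom C (Id C X) = X \<and> Cod C (Id C X) = X"
   and c3: "\<And>f g. f\<in>Arr C \<Longrightarrow> g\<in>Arr C \<Longrightarrow> Cod C f = Dom C g \<Longrightarrow>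
         Comp C g f \<in> Arr C \<and> Dom C (Comp C g f) = Dom C f \<and> Cod C (Comp C g f) = Cod C g"
   and c4: "\<And>f. f\<in>Arr C \<Longrightarrow> Comp C (Id C (Cod C f)) f = f \<and> Comp C f (Id C (Dom C f)) = f"
   and c5: "\<And>f g h. f\<in>Arr C \<Longrightarrow> g\<in>Arr C \<Longrightarrow> h\<in>Arr C \<Longrightarrow> Cod C f = Dom C g \<Longrightarrow> Cod C g = Dom C h \<Longrightarrow>
         Comp C h (Comp C g f) = Comp C (Comp C h g) f"
    using C unfolding is_category_def by blast+
  let ?S = "slice C A"
  have h1: "Dom ?S f \<in> Obj ?S \<and> Cod ?S f \<in> Obj ?S" if "f \<in> Arr ?S" for f
    using that by (cases f) (auto simp: slice_simps)
  have h2: "Id ?S X \<in> Arr ?S \<and> Dom ?S (Id ?S X) = X \<and> Cod ?S (Id ?S X) = X" if "X \<in> Obj ?S" for X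
    using that c1 c2 c4 by (auto simp: slice_simps)
  have h3: "Comp ?S g f \<in> Arr ?S \<and> Dom ?S (Comp ?S g f) = Dom ?S f \<and> Cod ?S (Comp ?S g f) = Cod ?S g"
    if "f \<in> Arr ?S" "g \<in> Arr ?S" "Cod ?S f = Dom ?S g" for f g
    using that c3 c5 by (cases f; cases g) (auto simp: slice_simps)
  have h4: "Comp ?S (Id ?S (Cod ?S f)) f = f \<and> Comp ?S f (Id ?S (Dom ?S f)) = f" if "f \<in> Arr ?S" for f
  proof -
    obtain x g y where f: "f = (x,g,y)" by (cases f)
    have "g \<in> Arr C" "Cod C g = Dom C y" "Dom C g = Dom C x" using that f by (auto simp: slice_simps)
    then show ?thesis using c4[of g] f by (simp add: slice_simps)
  qed
  have h5: "Comp ?S h (Comp ?S g f) = Comp ?S (Comp ?S h g) f"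
    if "f \<in> Arr ?S" "g \<in> Arr ?S" "h \<in> Arr ?S" "Cod ?S f = Dom ?S g" "Cod ?S g = Dom ?S h" for f g h
    using that c5 by (cases f; cases g; cases h) (auto simp: slice_simps)
  show ?thesis unfolding is_category_def using h1 h2 h3 h4 h5 by blast
qed


lemma cat_facts:
  assumes C: "is_category C"
  shows c1: "\<And>f. f\<in>Arr C \<Longrightarrow> Dom C f \<in> Obj C \<and> Cod C f \<in> Obj C"
   and c2: "\<And>X. X\<in>Obj C \<Longrightarrow> Id C X \<in> Arr C \<and> Dom C (Id C X) = X \<and> Cod C (Id C X) = X"
   and c3: "\<And>f g. f\<in>Arr C \<Longrightarrow> g\<in>Arr C \<Longrightarrow> Cod C f = Dom C g \<Longrightarrow>
         Comp C g f \<in> Arr C \<and> Dom C (Comp C g f) = Dom C f \<and> Cod C (Comp C g f) = Cod C g"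
   and c4: "\<And>f. f\<in>Arr C \<Longrightarrow> Comp C (Id C (Cod C f)) f = f \<and> Comp C f (Id C (Dom C f)) = f"
   and c5: "\<And>f g h. f\<in>Arr C \<Longrightarrow> g\<in>Arr C \<Longrightarrow> h\<in>Arr C \<Longrightarrow> Cod C f = Dom C g \<Longrightarrow> Cod C g = Dom C h \<Longrightarrow>
         Comp C h (Comp C g f) = Comp C (Comp C h g) f"
  using C unfolding is_category_def by blast+

lemma slice_term:
  assumes C: "is_category C" and A: "A \<in> Obj C"
  shows "is_terminal (slice C A) (Id C A)"
proof -
  note cf = cat_facts[OF C]
  have IA: "Id C A \<in> Arr C" "Dom C (Id C A) = A" "Cod C (Id C A) = A" using cf(2)[OF A] by auto
  show ?thesis unfolding is_terminal_def
  proof (intro conjI ballI)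
    show "Id C A \<in> Obj (slice C A)" using IA by (simp add: slice_simps)
  next
    fix X assume X: "X \<in> Obj (slice C A)"
    then have Xa: "X \<in> Arr C" "Cod C X = A" by (auto simp: slice_simps)
    have w: "(X, X, Id C A) \<in> Arr (slice C A)"
      using Xa IA cf(4)[OF Xa(1)] by (simp add: slice_simps)
    show "\<exists>!f. f \<in> Arr (slice C A) \<and> Dom (slice C A) f = X \<and> Cod (slice C A) f = Id C A"
    proof (rule ex1I[of _ "(X, X, Id C A)"])
      show "(X, X, Id C A) \<in> Arr (slice C A) \<and> Dom (slice C A) (X, X, Id C A) = X \<and> Cod (slice C A) (X, X, Id C A) = Id C A"
        using w IA by (auto simp: slice_simps)
    next
      fix f assume f: "f \<in> Arr (slice C A) \<and> Dom (slice C A) f = X \<and> Cod (slice C A) f = Id C A"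
      obtain x g y where fe: "f = (x,g,y)" by (cases f)
      have "x = X" "y = Id C A" "g \<in> Arr C" "Cod C g = A" "Comp C (Id C A) g = X"
        using f fe IA by (auto simp: slice_simps)
      moreover have "Comp C (Id C A) g = g" using cf(4)[of g] calculation by simp
      ultimately show "f = (X, X, Id C A)" using fe by simp
    qed
  qed
qed

lemma Sigma_functor:
  assumes C: "is_category C" and A: "A \<in> Obj C"
  shows "is_functor (slice C A) C (Sigma_fun C A)"
proof -
  note cf = cat_facts[OF C]
  let ?S = "slice C A"
  have o: "FObj (Sigma_fun C A) x = (if x \<in> Obj ?S then Dom C x else undefined)" for x
    by (simp add: Sigma_fun_def)
  have a: "FArr (Sigma_fun C A) t = (if t \<in> Arr ?S then fst (snd t) else undefined)" for t
    by (simp add: Sigma_fun_def)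
  have h1: "FObj (Sigma_fun C A) X \<in> Obj C" if "X \<in> Obj ?S" for X
    using that cf(1) by (auto simp: o slice_simps)
  have h2: "FArr (Sigma_fun C A) f \<in> Arr C \<and> Dom C (FArr (Sigma_fun C A) f) = FObj (Sigma_fun C A) (Dom ?S f)
         \<and> Cod C (FArr (Sigma_fun C A) f) = FObj (Sigma_fun C A) (Cod ?S f)" if "f \<in> Arr ?S" for f
    using that by (cases f) (auto simp: o a slice_simps)
  have h3: "FArr (Sigma_fun C A) (Id ?S X) = Id C (FObj (Sigma_fun C A) X)" if "X \<in> Obj ?S" for X
  proof -
    have "Id ?S X \<in> Arr ?S" using slice_cat[OF C A] that unfolding is_category_def by blast
    then show ?thesis using that by (simp add: o a slice_simps)
  qed
  have h4: "FArr (Sigma_fun C A) (Comp ?S g f) = Comp C (FArr (Sigma_fun C A) g) (FArr (Sigma_fun C A) f)"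
    if "f \<in> Arr ?S" "g \<in> Arr ?S" "Cod ?S f = Dom ?S g" for f g
  proof -
    have "Comp ?S g f \<in> Arr ?S" using slice_cat[OF C A] that unfolding is_category_def by blast
    then show ?thesis using that by (cases f; cases g) (simp add: a slice_simps)
  qed
  show ?thesis unfolding is_functor_def using h1 h2 h3 h4 by (auto simp: o a)
qed


lemma functor_facts:
  assumes "is_functor C D F"
  shows f1: "\<And>X. X\<in>Obj C \<Longrightarrow> FObj F X \<in> Obj D"
    and f2: "\<And>f. f\<in>Arr C \<Longrightarrow> FArr F f \<in> Arr D \<and> Dom D (FArr F f) = FObj F (Dom C f)
                                     \<and> Cod D (FArr F f) = FObj F (Cod C f)"
    and f3: "\<And>X. X\<in>Obj C \<Longrightarrow> FArr F (Id C X) = Id D (FObj F X)"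
    and f4: "\<And>f g. f\<in>Arr C \<Longrightarrow> g\<in>Arr C \<Longrightarrow> Cod C f = Dom C g \<Longrightarrow>
         FArr F (Comp C g f) = Comp D (FArr F g) (FArr F f)"
    and f5: "\<And>X. X \<notin> Obj C \<Longrightarrow> FObj F X = undefined"
    and f6: "\<And>f. f \<notin> Arr C \<Longrightarrow> FArr F f = undefined"
  using assms unfolding is_functor_def by blast+

theorem mainTheorem1:
  fixes C :: "('o, 'a) cat" and A :: 'o
    and D :: "('p, 'b) cat" and T :: 'p
    and F :: "('p, 'b, 'o, 'a) ftor" and \<alpha> :: 'a
  assumes "is_ptd_cat A C"
    and "is_tptd_cat T D"
    and "ptd_hom T D A C (F, \<alpha>)"
  shows "is_tptd_cat (Id C A) (slice C A)
     \<and> ptd_hom (Id C A) (slice C A) A C (Sigma_fun C A, Id C A)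
     \<and> (\<exists>!Fa. ptd_hom T D (Id C A) (slice C A) Fa
              \<and> ptd_comp D C (Sigma_fun C A, Id C A) Fa = (F, \<alpha>))"
proof -
  let ?S = "slice C A"
  let ?\<Sigma> = "Sigma_fun C A"
  have Cc: "is_category C" and A: "A \<in> Obj C" using assms(1) unfolding is_ptd_cat_def by auto
  have Dc: "is_category D" and T: "T \<in> Obj D" and Tt: "is_terminal D T"
    and ptdD: "is_ptd_cat T D"
    using assms(2) unfolding is_tptd_cat_def is_ptd_cat_def by auto
  have Ff: "is_functor D C F" and al: "\<alpha> \<in> Arr C" "Dom C \<alpha> = FObj F T" "Cod C \<alpha> = A"
    using assms(3) unfolding ptd_hom_def by auto
  note cf = cat_facts[OF Cc] and df = cat_facts[OF Dc] and ff = functor_facts[OF Ff]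
  have IA: "Id C A \<in> Arr C" "Dom C (Id C A) = A" "Cod C (Id C A) = A" using cf(2)[OF A] by auto
  have Scat: "is_category ?S" by (rule slice_cat[OF Cc A])
  have IAS: "Id C A \<in> Obj ?S" using IA by (simp add: slice_simps)
  have part1: "is_tptd_cat (Id C A) ?S"
    unfolding is_tptd_cat_def is_ptd_cat_def using Scat IAS slice_term[OF Cc A] by auto
  have Sf: "is_functor ?S C ?\<Sigma>" by (rule Sigma_functor[OF Cc A])
  have SigO: "FObj ?\<Sigma> x = (if x \<in> Obj ?S then Dom C x else undefined)" for x
    by (simp add: Sigma_fun_def)
  have SigA: "FArr ?\<Sigma> t = (if t \<in> Arr ?S then fst (snd t) else undefined)" for t
    by (simp add: Sigma_fun_def)
  have part2: "ptd_hom (Id C A) ?S A C (?\<Sigma>, Id C A)"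
    unfolding ptd_hom_def using part1 assms(1) Sf IA IAS
    by (auto simp: is_tptd_cat_def SigO)
  define bang where "bang X = (THE f. f \<in> Arr D \<and> Dom D f = X \<and> Cod D f = T)" for X
  have bang: "bang X \<in> Arr D \<and> Dom D (bang X) = X \<and> Cod D (bang X) = T" if "X \<in> Obj D" for X
    unfolding bang_def by (rule theI') (use Tt that in \<open>auto simp: is_terminal_def\<close>)
  have bang_u: "f = bang X" if "X \<in> Obj D" "f \<in> Arr D" "Dom D f = X" "Cod D f = T" for f X
    unfolding bang_def by (rule the1_equality[symmetric]) (use Tt that in \<open>auto simp: is_terminal_def\<close>)
  have bangT: "bang T = Id D T" using bang_u[of T "Id D T"] df(2)[OF T] T by auto
  define g0 where "g0 X = Comp C \<alpha> (FArr F (bang X))" for X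
  have g0: "g0 X \<in> Obj ?S \<and> Dom C (g0 X) = FObj F X" if "X \<in> Obj D" for X
  proof -
    have "FArr F (bang X) \<in> Arr C" "Dom C (FArr F (bang X)) = FObj F X" "Cod C (FArr F (bang X)) = FObj F T"
      using ff(2)[of "bang X"] bang[OF that] by auto
    then show ?thesis using cf(3)[of "FArr F (bang X)" \<alpha>] al unfolding g0_def by (auto simp: slice_simps)
  qed
  have g0T: "g0 T = \<alpha>"
    unfolding g0_def bangT using ff(3)[OF T] cf(4)[OF al(1)] al by simp
  have g0comp: "Comp C (g0 (Cod D f)) (FArr F f) = g0 (Dom D f)" if f: "f \<in> Arr D" for f
  proof -
    let ?X = "Dom D f" and ?Y = "Cod D f"
    have XY: "?X \<in> Obj D" "?Y \<in> Obj D" using df(1)[OF f] by auto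
    have bY: "bang ?Y \<in> Arr D" "Dom D (bang ?Y) = ?Y" "Cod D (bang ?Y) = T" using bang[OF XY(2)] by auto
    have cmp: "Comp D (bang ?Y) f = bang ?X"
      using bang_u[OF XY(1)] df(3)[OF f bY(1)] bY by auto
    have Ff1: "FArr F f \<in> Arr C" "Cod C (FArr F f) = FObj F ?Y" using ff(2)[OF f] by auto
    have Fb: "FArr F (bang ?Y) \<in> Arr C" "Dom C (FArr F (bang ?Y)) = FObj F ?Y" "Cod C (FArr F (bang ?Y)) = FObj F T"
      using ff(2)[OF bY(1)] bY by auto
    have "Comp C (g0 ?Y) (FArr F f) = Comp C \<alpha> (Comp C (FArr F (bang ?Y)) (FArr F f))"
      unfolding g0_def using cf(5)[OF Ff1(1) Fb(1) al(1)] Ff1 Fb al by simp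
    also have "\<dots> = Comp C \<alpha> (FArr F (bang ?X))"
      using ff(4)[OF f bY(1)] bY cmp by simp
    finally show ?thesis unfolding g0_def .
  qed
  define G :: "('p, 'b, 'a, 'a \<times> 'a \<times> 'a) ftor" where
    "G = \<lparr> FObj = (\<lambda>X. if X \<in> Obj D then g0 X else undefined),
           FArr = (\<lambda>f. if f \<in> Arr D then (g0 (Dom D f), FArr F f, g0 (Cod D f)) else undefined) \<rparr>"
  have GO: "FObj G X = (if X \<in> Obj D then g0 X else undefined)" for X by (simp add: G_def)
  have GA: "FArr G f = (if f \<in> Arr D then (g0 (Dom D f), FArr F f, g0 (Cod D f)) else undefined)" for f
    by (simp add: G_def)
  have GArr: "FArr G f \<in> Arr ?S" if f: "f \<in> Arr D" for f
  proof -
    have XY: "Dom D f \<in> Obj D" "Cod D f \<in> Obj D" using df(1)[OF f] by auto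
    show ?thesis using g0[OF XY(1)] g0[OF XY(2)] ff(2)[OF f] g0comp[OF f] f
      by (auto simp: GA slice_simps)
  qed
  have Gfun: "is_functor D ?S G"
  proof -
    have h1: "FObj G X \<in> Obj ?S" if "X \<in> Obj D" for X using g0 that by (simp add: GO)
    have h2: "FArr G f \<in> Arr ?S \<and> Dom ?S (FArr G f) = FObj G (Dom D f) \<and> Cod ?S (FArr G f) = FObj G (Cod D f)"
      if f: "f \<in> Arr D" for f
      using GArr[OF f] df(1)[OF f] f by (simp add: GA GO slice_simps)
    have h3: "FArr G (Id D X) = Id ?S (FObj G X)" if X: "X \<in> Obj D" for X
      using df(2)[OF X] ff(3)[OF X] g0[OF X] X by (simp add: GA GO slice_simps)
    have h4: "FArr G (Comp D g f) = Comp ?S (FArr G g) (FArr G f)"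
      if "f \<in> Arr D" "g \<in> Arr D" "Cod D f = Dom D g" for f g
      using that df(3)[OF that] ff(4)[OF that] by (simp add: GA slice_simps)
    show ?thesis unfolding is_functor_def using h1 h2 h3 h4 by (auto simp: GO GA)
  qed
  let ?\<beta> = "(\<alpha>, \<alpha>, Id C A)"
  have beta: "?\<beta> \<in> Arr ?S" using al IA cf(4)[OF al(1)] by (auto simp: slice_simps)
  have exhom: "ptd_hom T D (Id C A) ?S (G, ?\<beta>)"
    unfolding ptd_hom_def using ptdD part1 Gfun beta T g0T
    by (auto simp: is_tptd_cat_def slice_simps GO)
  have excomp: "ptd_comp D C (?\<Sigma>, Id C A) (G, ?\<beta>) = (F, \<alpha>)"
  proof -
    have "fcomp D ?\<Sigma> G = F"
    proof (rule ftor.equality)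
      show "FObj (fcomp D ?\<Sigma> G) = FObj F"
      proof
        fix X show "FObj (fcomp D ?\<Sigma> G) X = FObj F X"
          using g0[of X] ff(5)[of X] by (auto simp: fcomp_def SigO GO)
      qed
      show "FArr (fcomp D ?\<Sigma> G) = FArr F"
      proof
        fix f show "FArr (fcomp D ?\<Sigma> G) f = FArr F f"
          using GArr[of f] ff(6)[of f] by (auto simp: fcomp_def SigA GA)
      qed
    qed (simp add: fcomp_def)
    moreover have "Comp C (Id C A) (FArr ?\<Sigma> ?\<beta>) = \<alpha>"
      using beta cf(4)[OF al(1)] al by (simp add: SigA)
    ultimately show ?thesis by (simp add: ptd_comp_def)
  qed
  have uniq: "Fa = (G, ?\<beta>)" if h: "ptd_hom T D (Id C A) ?S Fa" "ptd_comp D C (?\<Sigma>, Id C A) Fa = (F, \<alpha>)" for Fa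
  proof -
    obtain G' \<beta>' where Fa: "Fa = (G', \<beta>')" by (cases Fa)
    have G'f: "is_functor D ?S G'" and b': "\<beta>' \<in> Arr ?S" "Dom ?S \<beta>' = FObj G' T" "Cod ?S \<beta>' = Id C A"
      using h(1) Fa unfolding ptd_hom_def by auto
    note gf = functor_facts[OF G'f]
    have fc: "fcomp D ?\<Sigma> G' = F" and ca: "Comp C (Id C A) (FArr ?\<Sigma> \<beta>') = \<alpha>"
      using h(2) Fa by (auto simp: ptd_comp_def)
    obtain x g y where be: "\<beta>' = (x, g, y)" by (cases \<beta>')
    have xgy: "y = Id C A" "g \<in> Arr C" "Cod C g = A" "Comp C y g = x" "x = FObj G' T"
      using b' be IA by (auto simp: slice_simps)
    have "Comp C (Id C A) g = g" using cf(4)[OF xgy(2)] xgy by simp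
    then have gx: "g = \<alpha>" "x = \<alpha>" using ca b' be xgy by (auto simp: SigA)
    have G'T: "FObj G' T = \<alpha>" using gx xgy by simp
    have FA: "FArr ?\<Sigma> (FArr G' f) = FArr F f" if "f \<in> Arr D" for f
      using arg_cong[OF fc, of "\<lambda>H. FArr H f"] that by (simp add: fcomp_def)
    have G'O: "FObj G' X = g0 X" if X: "X \<in> Obj D" for X
    proof -
      have bX: "bang X \<in> Arr D" "Dom D (bang X) = X" "Cod D (bang X) = T" using bang[OF X] by auto
      have "FArr G' (bang X) \<in> Arr ?S" "Dom ?S (FArr G' (bang X)) = FObj G' X" "Cod ?S (FArr G' (bang X)) = \<alpha>"
        using gf(2)[OF bX(1)] bX G'T by auto
      moreover have "fst (snd (FArr G' (bang X))) = FArr F (bang X)"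
        using FA[OF bX(1)] calculation(1) by (simp add: SigA)
      ultimately show ?thesis unfolding g0_def
        by (cases "FArr G' (bang X)") (auto simp: slice_simps)
    qed
    have G'A: "FArr G' f = (g0 (Dom D f), FArr F f, g0 (Cod D f))" if f: "f \<in> Arr D" for f
    proof -
      have XY: "Dom D f \<in> Obj D" "Cod D f \<in> Obj D" using df(1)[OF f] by auto
      have "FArr G' f \<in> Arr ?S" "Dom ?S (FArr G' f) = g0 (Dom D f)" "Cod ?S (FArr G' f) = g0 (Cod D f)"
        using gf(2)[OF f] G'O[OF XY(1)] G'O[OF XY(2)] by auto
      moreover have "fst (snd (FArr G' f)) = FArr F f"
        using FA[OF f] calculation(1) by (simp add: SigA)
      ultimately show ?thesis by (cases "FArr G' f") (auto simp: slice_simps)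
    qed
    have "G' = G"
    proof (rule ftor.equality)
      show "FObj G' = FObj G" proof fix X show "FObj G' X = FObj G X" using G'O[of X] gf(5)[of X] by (cases "X \<in> Obj D") (simp_all add: GO) qed
      show "FArr G' = FArr G" proof fix f show "FArr G' f = FArr G f" using G'A[of f] gf(6)[of f] by (cases "f \<in> Arr D") (simp_all add: GA) qed
    qed simp
    then show ?thesis unfolding Fa be gx(2) xgy(1) gx(1) by simp
  qed
  have "\<exists>!Fa. ptd_hom T D (Id C A) ?S Fa \<and> ptd_comp D C (?\<Sigma>, Id C A) Fa = (F, \<alpha>)"
    proof (rule ex1I[of _ "(G, ?\<beta>)"])
    show "ptd_hom T D (Id C A) ?S (G, ?\<beta>) \<and> ptd_comp D C (?\<Sigma>, Id C A) (G, ?\<beta>) = (F, \<alpha>)"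
      using exhom excomp by (rule conjI)
  next
    fix Fa assume "ptd_hom T D (Id C A) ?S Fa \<and> ptd_comp D C (?\<Sigma>, Id C A) Fa = (F, \<alpha>)"
    then show "Fa = (G, ?\<beta>)" using uniq by blast
  qed
  then show ?thesis using part1 part2 by (intro conjI)
qed

end
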